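(* Let $D(s)=\sum_{n\ge1}a_nn^{-s}$ be a Dirichlet series with $\sigma_a(D)\le0$. Then $\mathcal{B}D$ has no zeros in $\mathbb{D}_0^\infty$ if and only if $a_1\ne0$ and $D$ has no zeros in $\mathbb{C}_0$. Consequently, if $a_1\ne0$ and $D$ has no zeros in $\mathbb{C}_0$, then for every completely multiplicative arithmetical function $\rho$ with $|\rho(n)|\le1$ for all $n$, the Dirichlet series $\sum_{n\ge1}a_n\rho(n)n^{-s}$ also has no zeros in $\mathbb{C}_0$.
   Context: $\sigma_a(D)$ is the abscissa of absolute convergence of $D$; $\mathbb{C}_0=\{\mathrm{Re}\,s>0\}$. Let $p_j$ be the $j$-th prime; for $n=p_1^{\alpha_1}\cdots p_N^{\alpha_N}$ write $\mathbf z^{\alpha(n)}=z_1^{\alpha_1}\cdots z_N^{\alpha_N}$. The Bohr transform is $\mathcal{B}D(\mathbf z)=\sum_{n\ge1}a_n\mathbf z^{\alpha(n)}$. $\mathbb{D}_0^\infty$ is the set of sequences $\mathbf z=(z_1,z_2,\dots)$ with $|z_j|<1$ for all $j$ and only finitely many nonzero entries; when $\sigma_a(D)\le0$, $\mathcal{B}D$ converges absolutely at every point of $\mathbb{D}_0^\infty$. A completely multiplicative function satisfies $\rho(1)=1$ and $\rho(mn)=\rho(m)\rho(n)$ for all $m,n$. *)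

theory Defs
  imports "HOL-Analysis.Analysis" "HOL-Computational_Algebra.Primes" "HOL-Library.Infinite_Set"
begin

(* Coefficients a :: nat => complex; only a n for n >= 1 matter (a 0 is ignored). *)

definition abs_conv_abscissa :: "(nat \<Rightarrow> complex) \<Rightarrow> ereal" where
  "abs_conv_abscissa a =
     Inf {ereal \<sigma> | \<sigma>. summable (\<lambda>n. norm (a (Suc n)) * real (Suc n) powr (-\<sigma>))}"

definition dirichlet_series :: "(nat \<Rightarrow> complex) \<Rightarrow> complex \<Rightarrow> complex" where
  "dirichlet_series a s = (\<Sum>n. a (Suc n) / of_nat (Suc n) powr s)"

(* j-th prime, 0-indexed: nth_prime 0 = 2, nth_prime 1 = 3, ... (p_{j+1} in the paper) *)
definition nth_prime :: "nat \<Rightarrow> nat" where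
  "nth_prime j = enumerate {p. prime p} j"

definition bohr_monomial :: "(nat \<Rightarrow> complex) \<Rightarrow> nat \<Rightarrow> complex" where
  "bohr_monomial z n = (\<Prod>j\<in>{j. nth_prime j dvd n}. z j ^ multiplicity (nth_prime j) n)"

definition bohr_transform :: "(nat \<Rightarrow> complex) \<Rightarrow> (nat \<Rightarrow> complex) \<Rightarrow> complex" where
  "bohr_transform a z = (\<Sum>n. a (Suc n) * bohr_monomial z (Suc n))"

definition D0_infty :: "(nat \<Rightarrow> complex) set" where
  "D0_infty = {z. (\<forall>j. norm (z j) < 1) \<and> finite {j. z j \<noteq> 0}}"

definition completely_multiplicative :: "(nat \<Rightarrow> complex) \<Rightarrow> bool" where
  "completely_multiplicative \<rho> \<longleftrightarrow>
     \<rho> 1 = 1 \<and> (\<forall>m n. m \<ge> 1 \<longrightarrow> n \<ge> 1 \<longrightarrow> \<rho> (m * n) = \<rho> m * \<rho> n)"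

end

theory Submission
  imports Defs "HOL-Complex_Analysis.Complex_Analysis" "HOL-Real_Asymp.Real_Asymp"
begin


lemma inf_primes: "infinite {p::nat. prime p}" using primes_infinite by simp

lemma nth_prime_prime [simp]: "prime (nth_prime j)"
  unfolding nth_prime_def using enumerate_in_set[OF inf_primes] by simp

lemma nth_prime_mono_iff [simp]: "nth_prime i < nth_prime j \<longleftrightarrow> i < j"
  unfolding nth_prime_def using inf_primes by simp

lemma nth_prime_inj: "inj nth_prime"
  by (metis injI nat_neq_iff nth_prime_mono_iff)

lemma nth_prime_eq_iff [simp]: "nth_prime i = nth_prime j \<longleftrightarrow> i = j"
  using nth_prime_inj by (auto dest: injD)

lemma nth_prime_gt: "j < nth_prime j"
proof (induction j)
  case 0 then show ?case using prime_gt_0_nat nth_prime_prime by blast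
next
  case (Suc k)
  have "nth_prime k < nth_prime (Suc k)" by simp
  then show ?case using Suc by linarith
qed

lemma nth_prime_surj: "prime p \<Longrightarrow> \<exists>j. nth_prime j = p"
  unfolding nth_prime_def using enumerate_Ex[OF inf_primes] by auto

lemma nth_prime_pos [simp]: "nth_prime j > 0"
  using prime_gt_0_nat nth_prime_prime by blast

lemma nth_prime_gt1 [simp]: "nth_prime j > 1"
  using prime_gt_1_nat nth_prime_prime by blast

lemma idx_dvd_less: "n > 0 \<Longrightarrow> nth_prime j dvd n \<Longrightarrow> j < n"
  using nth_prime_gt[of j] dvd_imp_le by (meson less_le_trans)

lemma finite_idx: "n > 0 \<Longrightarrow> finite {j. nth_prime j dvd n}"
  by (rule finite_subset[of _ "{..<n}"]) (auto dest: idx_dvd_less)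

lemma image_idx: "n > 0 \<Longrightarrow> nth_prime ` {j. nth_prime j dvd n} = prime_factors n"
proof safe
  fix j assume "n > 0" "nth_prime j dvd n"
  then show "nth_prime j \<in> prime_factors n" by (auto simp: prime_factors_dvd)
next
  fix p assume "n > 0" "p \<in> prime_factors n"
  then have "prime p" "p dvd n" by (auto simp: prime_factors_dvd)
  then obtain j where "nth_prime j = p" using nth_prime_surj by blast
  then show "p \<in> nth_prime ` {j. nth_prime j dvd n}" using \<open>p dvd n\<close> by blast
qed

lemma bm_reindex:
  assumes "n > 0"
  shows "(\<Prod>p\<in>prime_factors n. f p (multiplicity p n)) =
         (\<Prod>j\<in>{j. nth_prime j dvd n}. f (nth_prime j) (multiplicity (nth_prime j) n))"
  using prod.reindex[OF inj_on_subset[OF nth_prime_inj subset_UNIV, of "{j. nth_prime j dvd n}"]]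
    image_idx[OF assms] by (simp add: comp_def)

lemma bm_1 [simp]: "bohr_monomial z 1 = 1"
  by (simp add: bohr_monomial_def)

lemma bm_zero: "n > 1 \<Longrightarrow> bohr_monomial (\<lambda>_. 0) n = 0"
proof -
  assume "n > 1"
  then obtain p where "prime p" "p dvd n" using prime_factor_nat[of n] by auto
  then obtain j where j: "nth_prime j = p" using nth_prime_surj by blast
  have "multiplicity p n > 0" using \<open>prime p\<close> \<open>p dvd n\<close> \<open>n>1\<close>
    by (simp add: prime_multiplicity_gt_zero_iff)
  then show ?thesis unfolding bohr_monomial_def
    using finite_idx[of n] \<open>n>1\<close> j \<open>p dvd n\<close>
    by (intro prod_zero) (auto intro!: bexI[of _ j])
qed

lemma bm_mult: "bohr_monomial (\<lambda>j. x j * y j) n = bohr_monomial x n * bohr_monomial y n"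
  by (simp add: bohr_monomial_def power_mult_distrib prod.distrib)

lemma bm_local: "(\<And>j. nth_prime j dvd n \<Longrightarrow> x j = y j) \<Longrightarrow> bohr_monomial x n = bohr_monomial y n"
  unfolding bohr_monomial_def by (intro prod.cong) auto

lemma bm_local_less: "n > 0 \<Longrightarrow> (\<And>j. j < n \<Longrightarrow> x j = y j) \<Longrightarrow> bohr_monomial x n = bohr_monomial y n"
  by (rule bm_local) (auto dest: idx_dvd_less)

lemma bm_of_nat_gen:
  assumes "n > 0"
  shows "bohr_monomial (\<lambda>j. f (nth_prime j)) n = (\<Prod>p\<in>prime_factors n. f p ^ multiplicity p n)"
  unfolding bohr_monomial_def using bm_reindex[OF assms, of "\<lambda>p m. f p ^ m"] by simp

lemma cpn: "g > (0::nat) \<Longrightarrow> of_nat g powr (s::complex) = exp (s * of_real (ln (real g)))"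
  by (simp add: powr_def Ln_of_nat)

lemma cnat_powr_prod:
  fixes s :: complex
  assumes "finite A" "\<And>x. x \<in> A \<Longrightarrow> g x > (0::nat)"
  shows "of_nat (\<Prod>x\<in>A. g x) powr s = (\<Prod>x\<in>A. of_nat (g x) powr s)"
  using assms
proof (induction A rule: finite_induct)
  case empty then show ?case by simp
next
  case (insert x F)
  have "0 < (\<Prod>x\<in>F. g x)" using insert by (simp add: prod_pos)
  have "of_nat (\<Prod>x\<in>insert x F. g x) powr s = of_nat (g x * (\<Prod>x\<in>F. g x)) powr s"
    using insert by simp
  also have "\<dots> = exp (s * of_real (ln (real (g x) * real (\<Prod>x\<in>F. g x))))"
    using insert \<open>0 < (\<Prod>x\<in>F. g x)\<close> by (subst cpn) (auto simp del: of_nat_prod)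
  also have "\<dots> = of_nat (g x) powr s * of_nat (\<Prod>x\<in>F. g x) powr s"
    using insert \<open>0 < (\<Prod>x\<in>F. g x)\<close>
    by (subst (1 2) cpn) (auto simp: ln_mult exp_add algebra_simps simp del: of_nat_prod)
  finally show ?case using insert by simp
qed

lemma cnat_powr_pow:
  fixes s :: complex
  assumes "g > (0::nat)"
  shows "of_nat (g ^ m) powr s = (of_nat g powr s) ^ m"
  using assms
proof (induction m)
  case (Suc m)
  have "of_nat (g ^ Suc m) powr s = exp (s * of_real (ln (real g * real (g ^ m))))"
    using Suc by (subst cpn) (auto simp del: of_nat_power)
  also have "\<dots> = of_nat g powr s * of_nat (g ^ m) powr s"
    using Suc by (subst (1 2) cpn) (auto simp: ln_mult exp_add algebra_simps simp del: of_nat_power)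
  finally show ?case using Suc by simp
qed simp

lemma bm_powr:
  fixes s :: complex
  assumes "n > 0"
  shows "bohr_monomial (\<lambda>j. of_nat (nth_prime j) powr s) n = of_nat n powr s"
proof -
  have "bohr_monomial (\<lambda>j. of_nat (nth_prime j) powr s) n =
        (\<Prod>p\<in>prime_factors n. (of_nat p powr s) ^ multiplicity p n)"
    using bm_of_nat_gen[OF assms, of "\<lambda>p. of_nat p powr s"] by simp
  also have "\<dots> = (\<Prod>p\<in>prime_factors n. of_nat (p ^ multiplicity p n) powr s)"
    by (intro prod.cong refl, subst cnat_powr_pow) (auto simp: prime_factors_dvd prime_gt_0_nat dest: in_prime_factors_imp_prime)
  also have "\<dots> = of_nat (\<Prod>p\<in>prime_factors n. p ^ multiplicity p n) powr s"
    by (subst cnat_powr_prod) (auto simp: prime_factors_dvd prime_gt_0_nat dest: in_prime_factors_imp_prime)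
  also have "(\<Prod>p\<in>prime_factors n. p ^ multiplicity p n) = n"
    using prod_prime_factors[of n] assms by simp
  finally show ?thesis .
qed

lemma cm_prod:
  assumes "completely_multiplicative \<rho>" "finite A" "\<And>x. x \<in> A \<Longrightarrow> g x > (0::nat)"
  shows "\<rho> (\<Prod>x\<in>A. g x) = (\<Prod>x\<in>A. \<rho> (g x))"
  using assms(2,3)
proof (induction A rule: finite_induct)
  case empty then show ?case using assms(1) by (simp add: completely_multiplicative_def)
next
  case (insert x F)
  have "0 < (\<Prod>x\<in>F. g x)" using insert by (simp add: prod_pos)
  then show ?case using insert assms(1) unfolding completely_multiplicative_def
    by (simp add: Suc_le_eq)
qed

lemma cm_pow:
  assumes "completely_multiplicative \<rho>" "g > (0::nat)"
  shows "\<rho> (g ^ m) = \<rho> g ^ m"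
  using assms by (induction m) (auto simp: completely_multiplicative_def Suc_le_eq)

lemma bm_cm:
  assumes "completely_multiplicative \<rho>" "n > 0"
  shows "bohr_monomial (\<lambda>j. \<rho> (nth_prime j)) n = \<rho> n"
proof -
  have "bohr_monomial (\<lambda>j. \<rho> (nth_prime j)) n = (\<Prod>p\<in>prime_factors n. \<rho> p ^ multiplicity p n)"
    using bm_of_nat_gen[OF assms(2)] by simp
  also have "\<dots> = (\<Prod>p\<in>prime_factors n. \<rho> (p ^ multiplicity p n))"
    by (intro prod.cong refl, subst cm_pow[OF assms(1)]) (auto simp: prime_factors_dvd prime_gt_0_nat dest: in_prime_factors_imp_prime)
  also have "\<dots> = \<rho> (\<Prod>p\<in>prime_factors n. p ^ multiplicity p n)"
    by (subst cm_prod[OF assms(1)]) (auto simp: prime_factors_dvd prime_gt_0_nat dest: in_prime_factors_imp_prime)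
  also have "(\<Prod>p\<in>prime_factors n. p ^ multiplicity p n) = n"
    using prod_prime_factors[of n] assms by simp
  finally show ?thesis .
qed

lemma bm_one [simp]: "bohr_monomial (\<lambda>_. 1) n = 1"
  by (simp add: bohr_monomial_def)

lemma bm_norm_le1: "(\<And>j. norm (x j) \<le> 1) \<Longrightarrow> norm (bohr_monomial x n) \<le> 1"
  unfolding bohr_monomial_def prod_norm[symmetric] norm_power
  by (intro prod_le_1) (auto simp: power_le_one)

lemma bm_norm_mono: "(\<And>j. norm (x j) \<le> norm (y j)) \<Longrightarrow> norm (bohr_monomial x n) \<le> norm (bohr_monomial y n)"
  unfolding bohr_monomial_def prod_norm[symmetric] norm_power
  by (intro prod_mono) (auto simp: power_mono)



lemma norm_cnat_powr: "n > (0::nat) \<Longrightarrow> norm (of_nat n powr (s::complex)) = real n powr Re s"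
  by (simp add: cpn powr_def)

lemma cnat_powr_minus: "n > (0::nat) \<Longrightarrow> of_nat n powr (- s::complex) = inverse (of_nat n powr s)"
  by (simp add: cpn exp_minus)

definition Ksig :: "real \<Rightarrow> (nat \<Rightarrow> complex) set" where
  "Ksig \<sigma> = {z. \<forall>j. norm (z j) \<le> real (nth_prime j) powr (-\<sigma>)}"

lemma Ksig_antimono: "\<sigma> \<le> \<sigma>' \<Longrightarrow> Ksig \<sigma>' \<subseteq> Ksig \<sigma>"
  unfolding Ksig_def
proof safe
  fix z j assume "\<sigma> \<le> \<sigma>'" "\<forall>j. norm (z j) \<le> real (nth_prime j) powr - \<sigma>'"
  moreover have "real (nth_prime j) powr - \<sigma>' \<le> real (nth_prime j) powr - \<sigma>"
    using \<open>\<sigma> \<le> \<sigma>'\<close> by (intro powr_mono) (auto simp: Suc_le_eq)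
  ultimately show "norm (z j) \<le> real (nth_prime j) powr - \<sigma>" by (meson order.trans)
qed

lemma bm_Ksig:
  assumes "z \<in> Ksig \<sigma>" "n > 0"
  shows "norm (bohr_monomial z n) \<le> real n powr (-\<sigma>)"
proof -
  have "norm (bohr_monomial z n) \<le> norm (bohr_monomial (\<lambda>j. of_nat (nth_prime j) powr (- of_real \<sigma>)) n)"
    using assms(1) by (intro bm_norm_mono) (auto simp: Ksig_def norm_cnat_powr)
  also have "\<dots> = real n powr (-\<sigma>)"
    using assms(2) by (simp add: bm_powr norm_cnat_powr)
  finally show ?thesis .
qed

lemma summable_from_abscissa:
  assumes "abs_conv_abscissa a \<le> 0" "\<sigma> > 0"
  shows "summable (\<lambda>n. norm (a (Suc n)) * real (Suc n) powr (-\<sigma>))"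
proof -
  have "(0::ereal) < ereal \<sigma>" using assms(2) by simp
  with assms(1) have "abs_conv_abscissa a < ereal \<sigma>" by (rule order.strict_trans1)
  then have "\<exists>x\<in>{ereal \<sigma> | \<sigma>. summable (\<lambda>n. norm (a (Suc n)) * real (Suc n) powr (-\<sigma>))}. x < ereal \<sigma>"
    unfolding abs_conv_abscissa_def by (simp only: Inf_less_iff)
  then obtain \<tau> where \<tau>: "summable (\<lambda>n. norm (a (Suc n)) * real (Suc n) powr (-\<tau>))" "ereal \<tau> < ereal \<sigma>"
    by blast
  have "\<tau> < \<sigma>" using \<tau>(2) by simp
  show ?thesis
  proof (rule summable_comparison_test'[OF \<tau>(1)])
    fix n :: nat
    have "real (Suc n) powr (-\<sigma>) \<le> real (Suc n) powr (-\<tau>)"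
      using \<open>\<tau> < \<sigma>\<close> by (intro powr_mono) auto
    then show "norm (norm (a (Suc n)) * real (Suc n) powr (-\<sigma>)) \<le> norm (a (Suc n)) * real (Suc n) powr (-\<tau>)"
      by (simp add: mult_left_mono)
  qed
qed

lemma norm_suminf_le:
  fixes f :: "nat \<Rightarrow> 'a::banach"
  assumes "\<And>n. norm (f n) \<le> g n" "summable g"
  shows "norm (suminf f) \<le> suminf g"
proof -
  have "summable (\<lambda>n. norm (f n))"
    by (rule summable_comparison_test'[OF assms(2)]) (use assms(1) in auto)
  then have "norm (suminf f) \<le> (\<Sum>n. norm (f n))" by (rule summable_norm)
  also have "\<dots> \<le> suminf g" by (rule suminf_le) (use assms \<open>summable (\<lambda>n. norm (f n))\<close> in auto)
  finally show ?thesis .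
qed

lemma BD_term_bound:
  assumes "z \<in> Ksig \<sigma>"
  shows "norm (b (Suc n) * bohr_monomial z (Suc n)) \<le> norm (b (Suc n)) * real (Suc n) powr (-\<sigma>)"
  unfolding norm_mult by (intro mult_left_mono bm_Ksig assms) auto

lemma BD_summable:
  assumes "summable (\<lambda>n. norm (b (Suc n)) * real (Suc n) powr (-\<sigma>))" "z \<in> Ksig \<sigma>"
  shows "summable (\<lambda>n. norm (b (Suc n) * bohr_monomial z (Suc n)))"
  by (rule summable_comparison_test'[OF assms(1)]) (use BD_term_bound[OF assms(2)] in auto)

lemma BD_tendsto:
  assumes summ: "summable (\<lambda>n. norm (b (Suc n)) * real (Suc n) powr (-\<sigma>))"
    and y: "\<And>k. y k \<in> Ksig \<sigma>"
    and lim: "\<And>n. ((\<lambda>k. bohr_monomial (y k) (Suc n)) \<longlongrightarrow> bohr_monomial y' (Suc n)) F"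
    and F: "F \<noteq> bot"
  shows "((\<lambda>k. bohr_transform b (y k)) \<longlongrightarrow> bohr_transform b y') F"
proof -
  have l: "\<And>n. ((\<lambda>k. b (Suc n) * bohr_monomial (y k) (Suc n)) \<longlongrightarrow> b (Suc n) * bohr_monomial y' (Suc n)) F"
    by (intro tendsto_mult tendsto_const lim)
  have e: "\<forall>\<^sub>F (n, k) in at_top \<times>\<^sub>F F. norm (b (Suc n) * bohr_monomial (y k) (Suc n)) \<le> norm (b (Suc n)) * real (Suc n) powr - \<sigma>"
    using BD_term_bound[OF y] by (intro always_eventually) auto
  have "((\<lambda>k. suminf (\<lambda>n. b (Suc n) * bohr_monomial (y k) (Suc n))) \<longlongrightarrow>
           suminf (\<lambda>n. b (Suc n) * bohr_monomial y' (Suc n))) F"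
    using tannerys_theorem[OF l e summ F] by blast
  then show ?thesis unfolding bohr_transform_def .
qed

lemma BD_diff_bound:
  assumes s1: "summable (\<lambda>n. norm (b1 (Suc n)) * real (Suc n) powr (-\<sigma>))"
    and s2: "summable (\<lambda>n. norm (b2 (Suc n)) * real (Suc n) powr (-\<sigma>))"
    and z: "z \<in> Ksig \<sigma>"
  shows "norm (bohr_transform b1 z - bohr_transform b2 z) \<le>
           (\<Sum>n. norm (b1 (Suc n) - b2 (Suc n)) * real (Suc n) powr (-\<sigma>))"
proof -
  have sm1: "summable (\<lambda>n. b1 (Suc n) * bohr_monomial z (Suc n))"
    by (rule summable_norm_cancel[OF BD_summable[OF s1 z]])
  have sm2: "summable (\<lambda>n. b2 (Suc n) * bohr_monomial z (Suc n))"
    by (rule summable_norm_cancel[OF BD_summable[OF s2 z]])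
  have sd: "summable (\<lambda>n. norm (b1 (Suc n) - b2 (Suc n)) * real (Suc n) powr (-\<sigma>))"
  proof (rule summable_comparison_test'[OF summable_add[OF s1 s2]])
    fix n
    show "norm (norm (b1 (Suc n) - b2 (Suc n)) * real (Suc n) powr - \<sigma>) \<le>
          norm (b1 (Suc n)) * real (Suc n) powr - \<sigma> + norm (b2 (Suc n)) * real (Suc n) powr - \<sigma>"
    proof -
      have P: "real (Suc n) powr - \<sigma> \<ge> 0" by simp
      have "norm (b1 (Suc n) - b2 (Suc n)) * real (Suc n) powr - \<sigma> \<le> (norm (b1 (Suc n)) + norm (b2 (Suc n))) * real (Suc n) powr - \<sigma>"
        by (rule mult_right_mono[OF norm_triangle_ineq4 P])
      then show ?thesis using P by (simp add: distrib_right)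
    qed
  qed
  have "bohr_transform b1 z - bohr_transform b2 z = (\<Sum>n. (b1 (Suc n) - b2 (Suc n)) * bohr_monomial z (Suc n))"
    unfolding bohr_transform_def using suminf_diff[OF sm1 sm2] by (simp add: algebra_simps)
  also have "norm \<dots> \<le> (\<Sum>n. norm (b1 (Suc n) - b2 (Suc n)) * real (Suc n) powr (-\<sigma>))"
  proof (rule norm_suminf_le[OF _ sd])
    fix n
    show "norm ((b1 (Suc n) - b2 (Suc n)) * bohr_monomial z (Suc n)) \<le> norm (b1 (Suc n) - b2 (Suc n)) * real (Suc n) powr - \<sigma>"
      using BD_term_bound[OF z, where b="\<lambda>n. b1 n - b2 n" and n=n] by simp
  qed
  finally show ?thesis .
qed



lemma BD_holo_gen:
  assumes summ: "summable (\<lambda>n. norm (b (Suc n)) * real (Suc n) powr (-\<sigma>))"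
    and S: "open S" and phi: "\<And>s. s \<in> S \<Longrightarrow> \<phi> s \<in> Ksig \<sigma>"
    and hol: "\<And>n. (\<lambda>s. bohr_monomial (\<phi> s) (Suc n)) holomorphic_on S"
  shows "(\<lambda>s. bohr_transform b (\<phi> s)) holomorphic_on S"
proof -
  define f where "f = (\<lambda>n s. b (Suc n) * bohr_monomial (\<phi> s) (Suc n))"
  have ul: "uniform_limit S (\<lambda>N s. \<Sum>i<N. f i s) (\<lambda>s. suminf (\<lambda>i. f i s)) sequentially"
    by (rule Weierstrass_m_test[OF _ summ]) (use BD_term_bound phi in \<open>auto simp: f_def\<close>)
  have "(\<lambda>s. suminf (\<lambda>i. f i s)) holomorphic_on S"
  proof (rule holomorphic_uniform_sequence[OF S])
    fix N show "(\<lambda>s. \<Sum>i<N. f i s) holomorphic_on S"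
      unfolding f_def by (intro holomorphic_intros hol)
  next
    fix x assume "x \<in> S"
    then obtain d where "d > 0" "cball x d \<subseteq> S" using S open_contains_cball by blast
    then show "\<exists>d>0. cball x d \<subseteq> S \<and> uniform_limit (cball x d) (\<lambda>N s. \<Sum>i<N. f i s) (\<lambda>s. suminf (\<lambda>i. f i s)) sequentially"
      using uniform_limit_on_subset[OF ul] by blast
  qed
  then show ?thesis unfolding f_def bohr_transform_def .
qed

lemma BD_DS_mem:
  assumes "\<And>j. norm (x j) \<le> 1"
  shows "(\<lambda>j. x j * of_nat (nth_prime j) powr (-s)) \<in> Ksig (Re s)"
  unfolding Ksig_def
proof safe
  fix j
  have "norm (x j * of_nat (nth_prime j) powr (-s)) = norm (x j) * real (nth_prime j) powr (- Re s)"
    by (simp add: norm_mult norm_cnat_powr)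
  also have "\<dots> \<le> 1 * real (nth_prime j) powr (- Re s)"
    by (intro mult_right_mono assms) auto
  finally show "norm (x j * of_nat (nth_prime j) powr (-s)) \<le> real (nth_prime j) powr (- Re s)" by simp
qed

lemma bm_DS: "n > 0 \<Longrightarrow> bohr_monomial (\<lambda>j. x j * of_nat (nth_prime j) powr (-s)) n = bohr_monomial x n * of_nat n powr (-s)"
  by (simp add: bm_mult bm_powr)

lemma BD_DS:
  "bohr_transform b (\<lambda>j. x j * of_nat (nth_prime j) powr (-s)) = dirichlet_series (\<lambda>n. b n * bohr_monomial x n) s"
  unfolding bohr_transform_def dirichlet_series_def
proof (intro arg_cong[where f=suminf] ext)
  fix n
  show "b (Suc n) * bohr_monomial (\<lambda>j. x j * of_nat (nth_prime j) powr - s) (Suc n) =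
        b (Suc n) * bohr_monomial x (Suc n) / of_nat (Suc n) powr s"
    by (simp add: bm_DS cnat_powr_minus[of "Suc n"] divide_inverse del: of_nat_Suc)
qed

lemma DS_x_holo:
  assumes summ: "summable (\<lambda>n. norm (b (Suc n)) * real (Suc n) powr (-c))"
    and x: "\<And>j. norm (x j) \<le> 1"
  shows "(\<lambda>s. bohr_transform b (\<lambda>j. x j * of_nat (nth_prime j) powr (-s))) holomorphic_on {s. Re s > c}"
proof (rule BD_holo_gen[OF summ])
  show "open {s. c < Re s}" by (rule open_halfspace_Re_gt)
  fix s :: complex assume "s \<in> {s. c < Re s}"
  then show "(\<lambda>j. x j * of_nat (nth_prime j) powr - s) \<in> Ksig c"
    using BD_DS_mem[OF x, where s=s] Ksig_antimono[of c "Re s"] by auto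
next
  fix n
  have "(\<lambda>s. bohr_monomial x (Suc n) * exp (- s * of_real (ln (real (Suc n))))) holomorphic_on {s. c < Re s}"
    by (intro holomorphic_intros)
  moreover have "bohr_monomial (\<lambda>j. x j * of_nat (nth_prime j) powr - s) (Suc n) =
          bohr_monomial x (Suc n) * exp (- s * of_real (ln (real (Suc n))))" for s
    by (subst bm_DS) (simp_all add: cpn del: of_nat_Suc)
  ultimately show "(\<lambda>s. bohr_monomial (\<lambda>j. x j * of_nat (nth_prime j) powr - s) (Suc n)) holomorphic_on {s. c < Re s}"
    by simp
qed

lemma bm_upd: "bohr_monomial (u(j:=w)) n = bohr_monomial (u(j:=1)) n * w ^ multiplicity (nth_prime j) n"
proof -
  have "u(j:=w) = (\<lambda>i. (u(j:=1)) i * (if i = j then w else 1))" by auto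
  then have "bohr_monomial (u(j:=w)) n = bohr_monomial (u(j:=1)) n * bohr_monomial (\<lambda>i. if i = j then w else 1) n"
    using bm_mult[of "u(j:=1)" "\<lambda>i. if i = j then w else 1" n] by simp
  moreover have "bohr_monomial (\<lambda>i. if i = j then w else 1) n = w ^ multiplicity (nth_prime j) n"
  proof (cases "nth_prime j dvd n")
    case True
    have "bohr_monomial (\<lambda>i. if i = j then w else 1) n =
          (\<Prod>i\<in>{i. nth_prime i dvd n}. if i = j then w ^ multiplicity (nth_prime j) n else 1)"
      unfolding bohr_monomial_def by (intro prod.cong) auto
    also have "\<dots> = w ^ multiplicity (nth_prime j) n"
    proof (cases "n = 0")
      case True
      then have "infinite {i. nth_prime i dvd n}" by simp
      then show ?thesis using True by simp
    next
      case False
      then show ?thesis using True finite_idx[of n] by (subst prod.delta) auto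
    qed
    finally show ?thesis .
  next
    case False
    then have "multiplicity (nth_prime j) n = 0" by (simp add: not_dvd_imp_multiplicity_0)
    moreover have "bohr_monomial (\<lambda>i. if i = j then w else 1) n = 1"
      unfolding bohr_monomial_def using False by (intro prod.neutral) auto
    ultimately show ?thesis by simp
  qed
  ultimately show ?thesis by simp
qed

lemma upd_Ksig:
  assumes "u \<in> Ksig \<sigma>" "norm w \<le> real (nth_prime j) powr (-\<sigma>)"
  shows "u(j:=w) \<in> Ksig \<sigma>"
  using assms by (auto simp: Ksig_def)

lemma BD_coord_holo:
  assumes summ: "summable (\<lambda>n. norm (b (Suc n)) * real (Suc n) powr (-\<sigma>))"
    and u: "u \<in> Ksig \<sigma>"
  shows "(\<lambda>w. bohr_transform b (u(j:=w))) holomorphic_on ball 0 (real (nth_prime j) powr (-\<sigma>))"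
proof (rule BD_holo_gen[OF summ])
  fix w :: complex assume "w \<in> ball 0 (real (nth_prime j) powr - \<sigma>)"
  then show "u(j := w) \<in> Ksig \<sigma>" by (intro upd_Ksig u) auto
next
  fix n show "(\<lambda>w. bohr_monomial (u(j := w)) (Suc n)) holomorphic_on ball 0 (real (nth_prime j) powr - \<sigma>)"
    by (subst bm_upd) (intro holomorphic_intros)
qed auto



lemma bm_Suc0 [simp]: "bohr_monomial z (Suc 0) = 1"
  using bm_1 by simp

lemma powr_two_bound:
  assumes "m \<ge> (2::nat)" "\<sigma> \<ge> 1"
  shows "real m powr (-\<sigma>) \<le> 2 powr (1-\<sigma>) * real m powr (-1)"
proof -
  have "real m powr (-\<sigma>) = real m powr ((1-\<sigma>) + (-1))" by simp
  also have "\<dots> = real m powr (1-\<sigma>) * real m powr (-1)" by (rule powr_add)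
  also have "real m powr (1-\<sigma>) * real m powr (-1) \<le> 2 powr (1-\<sigma>) * real m powr (-1)"
    using assms by (intro mult_right_mono powr_mono2') auto
  finally show ?thesis .
qed

lemma BD_far:
  assumes summ: "summable (\<lambda>n. norm (b (Suc n)) * real (Suc n) powr (-1))"
    and z: "z \<in> Ksig \<sigma>" and s1: "\<sigma> \<ge> 1"
  shows "norm (bohr_transform b z - b 1) \<le> 2 powr (1-\<sigma>) * (\<Sum>n. norm (b (Suc n)) * real (Suc n) powr (-1))"
proof -
  define f where "f = (\<lambda>n. b (Suc n) * bohr_monomial z (Suc n))"
  define g where "g = (\<lambda>n. norm (b (Suc n)) * real (Suc n) powr (-1))"
  have summ\<sigma>: "summable (\<lambda>n. norm (b (Suc n)) * real (Suc n) powr (-\<sigma>))"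
  proof (rule summable_comparison_test'[OF summ])
    fix n
    have P: "real (Suc n) powr (-\<sigma>) \<le> real (Suc n) powr (-1)"
      using s1 by (intro powr_mono) auto
    show "norm (norm (b (Suc n)) * real (Suc n) powr - \<sigma>) \<le> norm (b (Suc n)) * real (Suc n) powr - 1"
      using mult_left_mono[OF P, of "norm (b (Suc n))"] by simp
  qed
  have sg: "summable g" unfolding g_def by (rule summ)
  have sgS: "summable (\<lambda>n. g (Suc n))" using sg by (subst summable_Suc_iff)
  have sf: "summable f" unfolding f_def by (rule summable_norm_cancel[OF BD_summable[OF summ\<sigma> z]])
  have "bohr_transform b z - b 1 = (\<Sum>n. f (Suc n))"
    using suminf_split_head[OF sf] by (simp add: f_def bohr_transform_def)
  also have "norm \<dots> \<le> (\<Sum>n. 2 powr (1-\<sigma>) * g (Suc n))"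
  proof (rule norm_suminf_le)
    fix n
    have "norm (f (Suc n)) \<le> norm (b (Suc (Suc n))) * real (Suc (Suc n)) powr (-\<sigma>)"
      unfolding f_def by (rule BD_term_bound[OF z])
    also have "\<dots> \<le> norm (b (Suc (Suc n))) * (2 powr (1-\<sigma>) * real (Suc (Suc n)) powr (-1))"
      by (intro mult_left_mono powr_two_bound s1) auto
    finally show "norm (f (Suc n)) \<le> 2 powr (1-\<sigma>) * g (Suc n)" by (simp add: g_def algebra_simps)
  next
    show "summable (\<lambda>n. 2 powr (1 - \<sigma>) * g (Suc n))"
      using sgS by (rule summable_mult)
  qed
  also have "\<dots> = 2 powr (1-\<sigma>) * (\<Sum>n. g (Suc n))"
    using suminf_mult[OF sgS] by simp
  also have "(\<Sum>n. g (Suc n)) \<le> (\<Sum>n. g n)"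
    using suminf_split_head[OF sg] by (simp add: g_def)
  then have "2 powr (1-\<sigma>) * (\<Sum>n. g (Suc n)) \<le> 2 powr (1-\<sigma>) * (\<Sum>n. g n)"
    by (intro mult_left_mono) auto
  finally show ?thesis by (simp add: g_def)
qed

lemma BD_far_nz:
  assumes summ: "summable (\<lambda>n. norm (b (Suc n)) * real (Suc n) powr (-1))"
    and b1: "b 1 \<noteq> 0"
  obtains \<sigma>0 where "\<sigma>0 \<ge> 1" "\<And>\<sigma> z. \<sigma> \<ge> \<sigma>0 \<Longrightarrow> z \<in> Ksig \<sigma> \<Longrightarrow> bohr_transform b z \<noteq> 0"
proof -
  define A where "A = (\<Sum>n. norm (b (Suc n)) * real (Suc n) powr (-1))"
  have "((\<lambda>\<sigma>::real. 2 powr (1-\<sigma>) * A) \<longlongrightarrow> 0) at_top" by real_asymp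
  then have "eventually (\<lambda>\<sigma>. 2 powr (1-\<sigma>) * A < norm (b 1)) at_top"
    using b1 by (intro order_tendstoD) auto
  moreover have "eventually (\<lambda>\<sigma>::real. \<sigma> \<ge> 1) at_top" by simp
  ultimately have "eventually (\<lambda>\<sigma>. \<sigma> \<ge> 1 \<and> 2 powr (1-\<sigma>) * A < norm (b 1)) at_top"
    by eventually_elim auto
  then obtain \<sigma>0 where H: "\<And>\<sigma>. \<sigma> \<ge> \<sigma>0 \<Longrightarrow> \<sigma> \<ge> 1 \<and> 2 powr (1-\<sigma>) * A < norm (b 1)"
    unfolding eventually_at_top_linorder by blast
  show ?thesis
  proof (rule that[of "\<sigma>0"])
    show "\<sigma>0 \<ge> 1" using H[of \<sigma>0] by simp
    fix \<sigma> z assume "\<sigma> \<ge> \<sigma>0" "z \<in> Ksig \<sigma>"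
    then have "norm (bohr_transform b z - b 1) < norm (b 1)"
      using BD_far[OF summ \<open>z \<in> Ksig \<sigma>\<close>] H[of \<sigma>] unfolding A_def by fastforce
    then show "bohr_transform b z \<noteq> 0" by auto
  qed
qed

lemma BD_at_zero: "bohr_transform b (\<lambda>_. 0) = b 1"
proof -
  have "(\<lambda>n. b (Suc n) * bohr_monomial (\<lambda>_. 0) (Suc n)) = (\<lambda>n. if n = 0 then (\<lambda>_. b 1) n else 0)"
  proof
    fix n show "b (Suc n) * bohr_monomial (\<lambda>_. 0) (Suc n) = (if n = 0 then (\<lambda>_. b 1) n else 0)"
      by (cases n) (auto simp: bm_zero)
  qed
  then show ?thesis unfolding bohr_transform_def using sums_single[of 0 "\<lambda>_. b 1"]
    by (simp add: sums_iff)
qed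

lemma D0_sub_Ksig:
  assumes "z \<in> D0_infty"
  obtains \<sigma> where "\<sigma> > 0" "z \<in> Ksig \<sigma>"
proof -
  have F: "finite {j. z j \<noteq> 0}" and lt: "\<And>j. norm (z j) < 1" using assms by (auto simp: D0_infty_def)
  have "eventually (\<lambda>\<sigma>. norm (z j) < real (nth_prime j) powr (-\<sigma>)) (at_right 0)" for j
  proof -
    have "((\<lambda>\<sigma>. real (nth_prime j) powr (-\<sigma>)) \<longlongrightarrow> real (nth_prime j) powr (-0)) (at_right 0)"
      by (intro tendsto_intros) auto
    then have "((\<lambda>\<sigma>. real (nth_prime j) powr (-\<sigma>)) \<longlongrightarrow> 1) (at_right 0)"
      using nth_prime_pos[of j] by simp
    then show ?thesis using lt[of j] by (intro order_tendstoD) auto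
  qed
  then have "eventually (\<lambda>\<sigma>. \<forall>j\<in>{j. z j \<noteq> 0}. norm (z j) < real (nth_prime j) powr (-\<sigma>)) (at_right 0)"
    using F by (intro eventually_ball_finite) auto
  moreover have "eventually (\<lambda>\<sigma>::real. \<sigma> > 0) (at_right 0)" by (rule eventually_at_right_less)
  ultimately have "eventually (\<lambda>\<sigma>. \<sigma> > 0 \<and> (\<forall>j\<in>{j. z j \<noteq> 0}. norm (z j) < real (nth_prime j) powr (-\<sigma>))) (at_right 0)"
    by eventually_elim auto
  then obtain \<sigma> where \<sigma>: "\<sigma> > 0" "\<forall>j\<in>{j. z j \<noteq> 0}. norm (z j) < real (nth_prime j) powr (-\<sigma>)"
    using eventually_happens'[OF trivial_limit_at_right_real] by blast
  have "z \<in> Ksig \<sigma>" unfolding Ksig_def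
  proof safe
    fix j show "norm (z j) \<le> real (nth_prime j) powr - \<sigma>"
      using \<sigma>(2) by (cases "z j = 0") auto
  qed
  then show ?thesis using that \<sigma>(1) by blast
qed



lemma DS_eq_BD1:
  "bohr_transform a (\<lambda>j. x j * of_nat (nth_prime j) powr (-s)) =
   bohr_transform (\<lambda>n. a n * bohr_monomial x n) (\<lambda>j. 1 * of_nat (nth_prime j) powr (-s))"
  by (simp only: BD_DS bm_one mult_1_right)

lemma summ_bm:
  assumes "summable (\<lambda>n. norm (a (Suc n)) * real (Suc n) powr (-c))" "\<And>j. norm (x j) \<le> 1"
  shows "summable (\<lambda>n. norm (a (Suc n) * bohr_monomial x (Suc n)) * real (Suc n) powr (-c))"
proof (rule summable_comparison_test'[OF assms(1)])
  fix n
  have "norm (a (Suc n) * bohr_monomial x (Suc n)) \<le> norm (a (Suc n))"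
    using bm_norm_le1[OF assms(2), where n="Suc n"] by (simp add: norm_mult mult_left_le)
  then show "norm (norm (a (Suc n) * bohr_monomial x (Suc n)) * real (Suc n) powr - c) \<le> norm (a (Suc n)) * real (Suc n) powr - c"
    by (simp add: mult_right_mono)
qed

lemma hurwitz_DS:
  assumes summ: "\<And>\<sigma>. \<sigma> > 0 \<Longrightarrow> summable (\<lambda>n. norm (a (Suc n)) * real (Suc n) powr (-\<sigma>))"
    and c: "c > 0"
    and xk: "\<And>k j. norm (x k j) \<le> 1" and xi: "\<And>j. norm (xi j) \<le> 1"
    and lim: "\<And>n. (\<lambda>k. bohr_monomial (x k) (Suc n)) \<longlonglongrightarrow> bohr_monomial xi (Suc n)"
    and nz: "\<And>k s. Re s > c \<Longrightarrow> bohr_transform a (\<lambda>j. x k j * of_nat (nth_prime j) powr (-s)) \<noteq> 0"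
    and a1: "a 1 \<noteq> 0"
    and s0: "Re s0 > c"
  shows "bohr_transform a (\<lambda>j. xi j * of_nat (nth_prime j) powr (-s0)) \<noteq> 0"
proof
  assume g0: "bohr_transform a (\<lambda>j. xi j * of_nat (nth_prime j) powr (-s0)) = 0"
  define S where "S = {s. Re s > c}"
  define F where "F = (\<lambda>k s. bohr_transform a (\<lambda>j. x k j * of_nat (nth_prime j) powr (-s)))"
  define g where "g = (\<lambda>s. bohr_transform a (\<lambda>j. xi j * of_nat (nth_prime j) powr (-s)))"
  have sc: "summable (\<lambda>n. norm (a (Suc n)) * real (Suc n) powr (-c))" using summ c by blast
  have S: "open S" "connected S" unfolding S_def
    by (auto intro!: convex_connected convex_halfspace_Re_gt open_halfspace_Re_gt)
  have holF: "F k holomorphic_on S" for k unfolding F_def S_def by (rule DS_x_holo[OF sc xk])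
  have holg: "g holomorphic_on S" unfolding g_def S_def by (rule DS_x_holo[OF sc xi])
  define \<eta> where "\<eta> = (\<lambda>k. \<Sum>n. norm (a (Suc n) * bohr_monomial (x k) (Suc n) - a (Suc n) * bohr_monomial xi (Suc n)) * real (Suc n) powr (-c))"
  have bnd: "norm (F k s - g s) \<le> \<eta> k" if "s \<in> S" for k s
  proof -
    have mem: "(\<lambda>j. 1 * of_nat (nth_prime j) powr (-s)) \<in> Ksig c"
      using BD_DS_mem[of "\<lambda>_. 1" s] Ksig_antimono[of c "Re s"] that by (auto simp: S_def)
    show ?thesis unfolding F_def g_def \<eta>_def DS_eq_BD1[of a "x k"] DS_eq_BD1[of a xi]
      by (rule BD_diff_bound[OF summ_bm[OF sc xk] summ_bm[OF sc xi] mem])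
  qed
  have \<eta>0: "\<eta> \<longlonglongrightarrow> 0"
  proof -
    have l: "\<And>n. ((\<lambda>k. norm (a (Suc n) * bohr_monomial (x k) (Suc n) - a (Suc n) * bohr_monomial xi (Suc n)) * real (Suc n) powr (-c)) \<longlongrightarrow> 0) sequentially"
    proof -
      fix n
      have "((\<lambda>k. norm (a (Suc n) * bohr_monomial (x k) (Suc n) - a (Suc n) * bohr_monomial xi (Suc n)) * real (Suc n) powr (-c)) \<longlongrightarrow>
             norm (a (Suc n) * bohr_monomial xi (Suc n) - a (Suc n) * bohr_monomial xi (Suc n)) * real (Suc n) powr (-c)) sequentially"
        by (intro tendsto_intros lim)
      then show "?thesis n" by simp
    qed
    have e: "\<forall>\<^sub>F (n, k) in at_top \<times>\<^sub>F sequentially. norm (norm (a (Suc n) * bohr_monomial (x k) (Suc n) - a (Suc n) * bohr_monomial xi (Suc n)) * real (Suc n) powr (-c)) \<le> 2 * (norm (a (Suc n)) * real (Suc n) powr (-c))"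
    proof (intro always_eventually allI, clarify)
      fix n k
      have "norm (a (Suc n) * bohr_monomial (x k) (Suc n) - a (Suc n) * bohr_monomial xi (Suc n)) \<le>
            norm (a (Suc n) * bohr_monomial (x k) (Suc n)) + norm (a (Suc n) * bohr_monomial xi (Suc n))"
        by (rule norm_triangle_ineq4)
      also have "\<dots> \<le> norm (a (Suc n)) + norm (a (Suc n))"
        using bm_norm_le1[of "x k" "Suc n", OF xk] bm_norm_le1[OF xi, where n="Suc n"]
        by (intro add_mono) (simp_all add: norm_mult mult_left_le)
      finally have "norm (a (Suc n) * bohr_monomial (x k) (Suc n) - a (Suc n) * bohr_monomial xi (Suc n)) * real (Suc n) powr (-c)
          \<le> (2 * norm (a (Suc n))) * real (Suc n) powr (-c)"
        by (intro mult_right_mono) auto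
      then show "norm (norm (a (Suc n) * bohr_monomial (x k) (Suc n) - a (Suc n) * bohr_monomial xi (Suc n)) * real (Suc n) powr (-c)) \<le> 2 * (norm (a (Suc n)) * real (Suc n) powr (-c))"
        by (simp add: mult.assoc)
    qed
    have "summable (\<lambda>n. 2 * (norm (a (Suc n)) * real (Suc n) powr (-c)))"
      using sc by (rule summable_mult)
    from tannerys_theorem[OF l e this] show ?thesis unfolding \<eta>_def by simp
  qed
  have ul: "uniform_limit K F g sequentially" if "compact K" "K \<subseteq> S" for K
  proof (rule uniform_limitI)
    fix e :: real assume "e > 0"
    then have "eventually (\<lambda>k. \<eta> k < e) sequentially"
      using \<eta>0 by (intro order_tendstoD) auto
    then show "\<forall>\<^sub>F k in sequentially. \<forall>s\<in>K. dist (F k s) (g s) < e"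
    proof eventually_elim
      case (elim k)
      show ?case using bnd[of _ k] elim that(2) by (auto simp: dist_norm intro: le_less_trans)
    qed
  qed
  obtain \<sigma>0 where \<sigma>0: "\<And>\<sigma> z. \<sigma> \<ge> \<sigma>0 \<Longrightarrow> z \<in> Ksig \<sigma> \<Longrightarrow> bohr_transform a z \<noteq> 0"
    using BD_far_nz[OF summ[of 1] a1] by (metis zero_less_one)
  define \<sigma> where "\<sigma> = max \<sigma>0 (c + 1)"
  have "g (of_real \<sigma>) \<noteq> 0"
    unfolding g_def using \<sigma>0[of \<sigma>] BD_DS_mem[OF xi, where s="of_real \<sigma>"] by (simp add: \<sigma>_def)
  moreover have "of_real \<sigma> \<in> S" using c by (simp add: S_def \<sigma>_def)
  ultimately have nc: "\<not> g constant_on S"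
    using g0 s0 unfolding constant_on_def g_def S_def by force
  have "g s0 \<noteq> 0"
    by (rule Hurwitz_no_zeros[OF S holF holg ul nc]) (use nz s0 in \<open>auto simp: F_def S_def\<close>)
  with g0 show False by (simp add: g_def)
qed

lemma easy_dir:
  assumes summ: "\<And>\<sigma>. \<sigma> > 0 \<Longrightarrow> summable (\<lambda>n. norm (a (Suc n)) * real (Suc n) powr (-\<sigma>))"
    and nz: "\<forall>z\<in>D0_infty. bohr_transform a z \<noteq> 0"
  shows "a 1 \<noteq> 0 \<and> (\<forall>s. Re s > 0 \<longrightarrow> dirichlet_series a s \<noteq> 0)"
proof
  have "(\<lambda>_. 0) \<in> D0_infty" by (simp add: D0_infty_def)
  then show a1: "a 1 \<noteq> 0" using nz BD_at_zero[of a] by metis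
  show "\<forall>s. Re s > 0 \<longrightarrow> dirichlet_series a s \<noteq> 0"
  proof (intro allI impI)
    fix s0 :: complex assume s0: "Re s0 > 0"
    define x :: "nat \<Rightarrow> nat \<Rightarrow> complex" where "x = (\<lambda>k j. if j < k then 1 else 0)"
    have "bohr_transform a (\<lambda>j. (\<lambda>_. 1) j * of_nat (nth_prime j) powr (-s0)) \<noteq> 0"
    proof (rule hurwitz_DS[OF summ, where c="Re s0 / 2" and x=x])
      show "\<And>k j. norm (x k j) \<le> 1" by (simp add: x_def)
      show "\<And>n. (\<lambda>k. bohr_monomial (x k) (Suc n)) \<longlonglongrightarrow> bohr_monomial (\<lambda>_. 1) (Suc n)"
      proof -
        fix n
        have "eventually (\<lambda>k. bohr_monomial (x k) (Suc n) = bohr_monomial (\<lambda>_. 1) (Suc n)) sequentially"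
          using eventually_ge_at_top[of "Suc n"]
        proof eventually_elim
          case (elim k) then show ?case by (intro bm_local_less) (auto simp: x_def)
        qed
        then show "?thesis n" by (rule tendsto_eventually)
      qed
      show "\<And>k s. Re s > Re s0 / 2 \<Longrightarrow> bohr_transform a (\<lambda>j. x k j * of_nat (nth_prime j) powr (-s)) \<noteq> 0"
      proof -
        fix k and s :: complex assume "Re s > Re s0 / 2"
        then have "Re s > 0" using s0 by linarith
        have "(\<lambda>j. x k j * of_nat (nth_prime j) powr (-s)) \<in> D0_infty"
          unfolding D0_infty_def
        proof safe
          fix j
          have "real (nth_prime j) powr (- Re s) < 1"
            using \<open>Re s > 0\<close> nth_prime_gt1[of j] by (intro powr_less_one) auto
          then show "norm (x k j * of_nat (nth_prime j) powr - s) < 1"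
            by (simp add: x_def norm_mult norm_cnat_powr)
        next
          show "finite {j. x k j * of_nat (nth_prime j) powr - s \<noteq> 0}"
            by (rule finite_subset[of _ "{..<k}"]) (auto simp: x_def)
        qed
        then show "bohr_transform a (\<lambda>j. x k j * of_nat (nth_prime j) powr (-s)) \<noteq> 0" using nz by blast
      qed
    qed (use s0 a1 in auto)
    then show "dirichlet_series a s0 \<noteq> 0" using BD_DS[of a "\<lambda>_. 1" s0] by simp
  qed
qed



lemma nth_prime_ne0 [simp]: "nth_prime j \<noteq> 0"
  using nth_prime_pos[of j] by linarith

lemma int_module: "module (\<lambda>r. (*) (real_of_int r))"
  by (simp add: Modules.module.intro distrib_left mult.commute)

lemma mult_prime_prod:
  assumes "finite P"
  shows "multiplicity (nth_prime j0) (\<Prod>j\<in>P. nth_prime j ^ e j) = (if j0 \<in> P then e j0 else 0)"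
proof -
  have "multiplicity (nth_prime j0) (\<Prod>j\<in>P. nth_prime j ^ e j) = (\<Sum>j\<in>P. multiplicity (nth_prime j0) (nth_prime j ^ e j))"
    using assms by (intro prime_elem_multiplicity_prod_distrib) auto
  also have "\<dots> = (\<Sum>j\<in>P. if j = j0 then e j0 else 0)"
  proof (intro sum.cong refl)
    fix j assume "j \<in> P"
    show "multiplicity (nth_prime j0) (nth_prime j ^ e j) = (if j = j0 then e j0 else 0)"
    proof (cases "j = j0")
      case True
      then show ?thesis
        by (simp add: prime_elem_multiplicity_power_distrib multiplicity_self prime_gt_1_nat)
    next
      case False
      then show ?thesis by (simp add: multiplicity_distinct_prime_power)
    qed
  qed
  also have "\<dots> = (if j0 \<in> P then e j0 else 0)"
    using assms by (simp add: sum.delta')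
  finally show ?thesis .
qed

lemma ln_prime_prod:
  assumes "finite P"
  shows "ln (real (\<Prod>j\<in>P. nth_prime j ^ e j)) = (\<Sum>j\<in>P. real (e j) * ln (real (nth_prime j)))"
  using assms by (simp add: ln_prod ln_realpow)

lemma ln_primes_indep:
  "module.independent (\<lambda>r. (*) (real_of_int r)) ((\<lambda>j. ln (real (nth_prime j))) ` {..<n})"
proof
  define \<theta> where "\<theta> = (\<lambda>j. ln (real (nth_prime j)))"
  have inj\<theta>: "inj \<theta>"
  proof (rule injI)
    fix i j assume "\<theta> i = \<theta> j"
    then have "real (nth_prime i) = real (nth_prime j)" unfolding \<theta>_def
      by (subst (asm) ln_inj_iff) auto
    then show "i = j" by simp
  qed
  assume "module.dependent (\<lambda>r. (*) (real_of_int r)) ((\<lambda>j. ln (real (nth_prime j))) ` {..<n})"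
  then obtain t u where t: "finite t" "t \<subseteq> \<theta> ` {..<n}" "(\<Sum>v\<in>t. real_of_int (u v) * v) = 0"
      and v0: "\<exists>v\<in>t. u v \<noteq> 0"
    unfolding module.dependent_explicit[OF int_module] \<theta>_def by blast
  define J where "J = {j. j < n \<and> \<theta> j \<in> t}"
  have tJ: "t = \<theta> ` J" using t(2) by (auto simp: J_def)
  have finJ: "finite J" by (auto simp: J_def)
  define c where "c = (\<lambda>j. u (\<theta> j))"
  have sumJ: "(\<Sum>j\<in>J. real_of_int (c j) * \<theta> j) = 0"
    using t(3) unfolding tJ c_def by (subst (asm) sum.reindex) (auto intro: inj_on_subset[OF inj\<theta>])
  obtain j0 where j0: "j0 \<in> J" "c j0 \<noteq> 0" using v0 unfolding tJ c_def by auto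
  define P where "P = {j\<in>J. c j > 0}"
  define N where "N = {j\<in>J. c j < 0}"
  have finP: "finite P" and finN: "finite N" using finJ by (auto simp: P_def N_def)
  define A where "A = (\<Prod>j\<in>P. nth_prime j ^ nat (c j))"
  define B where "B = (\<Prod>j\<in>N. nth_prime j ^ nat (- c j))"
  have lnA: "ln (real A) = (\<Sum>j\<in>P. real_of_int (c j) * \<theta> j)"
    unfolding A_def \<theta>_def using ln_prime_prod[OF finP] by (simp add: P_def)
  have lnB: "ln (real B) = - (\<Sum>j\<in>N. real_of_int (c j) * \<theta> j)"
    unfolding B_def \<theta>_def using ln_prime_prod[OF finN]
    by (simp add: N_def sum_negf[symmetric])
  have "(\<Sum>j\<in>J. real_of_int (c j) * \<theta> j) =
       (\<Sum>j\<in>J. (if c j > 0 then real_of_int (c j) * \<theta> j else 0) + (if c j < 0 then real_of_int (c j) * \<theta> j else 0))"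
    by (intro sum.cong refl) auto
  also have "\<dots> = (\<Sum>j\<in>P. real_of_int (c j) * \<theta> j) + (\<Sum>j\<in>N. real_of_int (c j) * \<theta> j)"
    unfolding sum.distrib P_def N_def using finJ by (simp add: sum.inter_filter)
  finally have "(\<Sum>j\<in>J. real_of_int (c j) * \<theta> j) =
       (\<Sum>j\<in>P. real_of_int (c j) * \<theta> j) + (\<Sum>j\<in>N. real_of_int (c j) * \<theta> j)" .
  then have "ln (real A) = ln (real B)" using sumJ lnA lnB by simp
  then have "real A = real B"
    by (subst (asm) ln_inj_iff) (auto simp: A_def B_def intro!: prod_pos)
  then have AB: "A = B" by simp
  have mA: "multiplicity (nth_prime j0) A = (if j0 \<in> P then nat (c j0) else 0)"
    unfolding A_def by (rule mult_prime_prod[OF finP])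
  have mB: "multiplicity (nth_prime j0) B = (if j0 \<in> N then nat (- c j0) else 0)"
    unfolding B_def by (rule mult_prime_prod[OF finN])
  show False
  proof (cases "c j0 > 0")
    case True
    then have "j0 \<in> P" "j0 \<notin> N" using j0 by (auto simp: P_def N_def)
    then show False using mA mB AB True by simp
  next
    case False
    then have "j0 \<in> N" "j0 \<notin> P" using j0 by (auto simp: P_def N_def)
    then show False using mA mB AB False j0 by simp
  qed
qed

lemma kron_primes:
  assumes u: "\<And>j. norm (u j) = 1" and "\<epsilon> > 0"
  obtains T :: real where "\<And>j. j < n \<Longrightarrow> norm (of_nat (nth_prime j) powr (- (\<i> * of_real T)) - u j) < \<epsilon>"
proof -
  define \<theta> where "\<theta> = (\<lambda>j. ln (real (nth_prime j)))"
  define \<alpha> where "\<alpha> = (\<lambda>j. - Arg (u j) / (2 * pi))"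
  define \<epsilon>' where "\<epsilon>' = min (1 / (4 * pi)) (\<epsilon> / (3 * pi))"
  have "\<epsilon>' \<le> 1 / (4 * pi)" "\<epsilon>' \<le> \<epsilon> / (3 * pi)" by (simp_all add: \<epsilon>'_def)
  have "\<epsilon>' > 0" using \<open>\<epsilon> > 0\<close> by (simp add: \<epsilon>'_def)
  have inj\<theta>: "inj_on \<theta> {..<n}"
    by (rule inj_onI) (auto simp: \<theta>_def)
  obtain t h where th: "\<And>i. i < n \<Longrightarrow> \<bar>t * \<theta> i - of_int (h i) - \<alpha> i\<bar> < \<epsilon>'"
    using Kronecker_thm_1[of \<theta> n \<epsilon>' \<alpha>] ln_primes_indep[of n] inj\<theta> \<open>\<epsilon>' > 0\<close>
    unfolding \<theta>_def by blast
  show ?thesis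
  proof (rule that[of "2 * pi * t"])
    fix j assume "j < n"
    define e where "e = t * \<theta> j - of_int (h j) - \<alpha> j"
    have e: "\<bar>e\<bar> < \<epsilon>'" using th[OF \<open>j < n\<close>] by (simp add: e_def)
    have "u j \<noteq> 0" using u[of j] by auto
    then have cu: "exp (\<i> * of_real (Arg (u j))) = u j"
      using cis_Arg[of "u j"] u[of j] by (simp add: cis_conv_exp sgn_div_norm)
    have "- (\<i> * of_real (2 * pi * t)) * of_real (\<theta> j) =
          (- 2 * pi * \<i> * of_real e) + (2 * of_int (- h j) * pi * \<i>) + \<i> * of_real (Arg (u j))"
      by (simp add: e_def \<alpha>_def algebra_simps)
    then have "of_nat (nth_prime j) powr (- (\<i> * of_real (2 * pi * t))) =
          exp (- 2 * pi * \<i> * of_real e) * exp (2 * of_int (- h j) * pi * \<i>) * exp (\<i> * of_real (Arg (u j)))"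
      by (simp add: cpn \<theta>_def exp_add[symmetric])
    also have "exp (2 * of_int (- h j) * pi * \<i>) = 1"
      by (rule exp_integer_2pi) auto
    finally have eq: "of_nat (nth_prime j) powr (- (\<i> * of_real (2 * pi * t))) - u j = u j * (exp (- 2 * pi * \<i> * of_real e) - 1)"
      using cu by (simp add: algebra_simps)
    have "norm (- 2 * pi * \<i> * of_real e) = 2 * pi * \<bar>e\<bar>" by (simp add: norm_mult)
    also have "\<dots> \<le> 2 * pi * (1 / (4 * pi))"
      using e \<open>\<epsilon>' \<le> 1 / (4 * pi)\<close> by (intro mult_left_mono) auto
    also have "\<dots> = 1 / 2" by simp
    finally have "norm (exp (- 2 * pi * \<i> * of_real e) - 1) \<le> 3 / 2 * (2 * pi * \<bar>e\<bar>)"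
      using norm_exp_bounds(2) \<open>norm (- 2 * pi * \<i> * of_real e) = 2 * pi * \<bar>e\<bar>\<close> by metis
    also have "\<dots> = 3 * pi * \<bar>e\<bar>" by simp
    also have "\<dots> < 3 * pi * (\<epsilon> / (3 * pi))"
      using e \<open>\<epsilon>' \<le> \<epsilon> / (3 * pi)\<close> by (intro mult_strict_left_mono) auto
    also have "\<dots> = \<epsilon>" by simp
    finally have "norm (exp (- 2 * pi * \<i> * of_real e) - 1) < \<epsilon>" .
    then show "norm (of_nat (nth_prime j) powr (- (\<i> * of_real (2 * pi * t))) - u j) < \<epsilon>"
      unfolding eq norm_mult u by simp
  qed
qed

lemma kron_seq:
  assumes u: "\<And>j. norm (u j) = 1"
  obtains T :: "nat \<Rightarrow> real" where
    "\<And>j. (\<lambda>k. of_nat (nth_prime j) powr (- (\<i> * of_real (T k)))) \<longlonglongrightarrow> u j"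
proof -
  have "\<forall>k. \<exists>T::real. \<forall>j<k. norm (of_nat (nth_prime j) powr (- (\<i> * of_real T)) - u j) < 1 / (Suc k)"
  proof
    fix k
    obtain T :: real where "\<And>j. j < k \<Longrightarrow> norm (of_nat (nth_prime j) powr (- (\<i> * of_real T)) - u j) < 1 / (Suc k)"
      using kron_primes[of u "1 / real (Suc k)" k, OF u] by auto
    then show "\<exists>T::real. \<forall>j<k. norm (of_nat (nth_prime j) powr (- (\<i> * of_real T)) - u j) < 1 / (Suc k)" by blast
  qed
  then obtain T :: "nat \<Rightarrow> real" where T: "\<And>k j. j < k \<Longrightarrow> norm (of_nat (nth_prime j) powr (- (\<i> * of_real (T k))) - u j) < 1 / (Suc k)"
    by metis
  show ?thesis
  proof (rule that[of T])
    fix j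
    have "(\<lambda>k. of_nat (nth_prime j) powr (- (\<i> * of_real (T k))) - u j) \<longlonglongrightarrow> 0"
    proof (rule Lim_null_comparison)
      show "\<forall>\<^sub>F k in sequentially. norm (of_nat (nth_prime j) powr (- (\<i> * of_real (T k))) - u j) \<le> 1 / real (Suc k)"
        using eventually_gt_at_top[of j] by eventually_elim (use T in \<open>auto intro: less_imp_le\<close>)
      show "(\<lambda>k. 1 / real (Suc k)) \<longlonglongrightarrow> 0" by (rule LIMSEQ_inverse_real_of_nat[unfolded inverse_eq_divide])
    qed
    then have "(\<lambda>k. (of_nat (nth_prime j) powr (- (\<i> * of_real (T k))) - u j) + u j) \<longlonglongrightarrow> 0 + u j"
      by (intro tendsto_intros)
    then show "(\<lambda>k. of_nat (nth_prime j) powr (- (\<i> * of_real (T k)))) \<longlonglongrightarrow> u j" by simp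
  qed
qed

lemma bm_tendsto:
  assumes "\<And>j. ((\<lambda>k. x k j) \<longlongrightarrow> y j) F"
  shows "((\<lambda>k. bohr_monomial (x k) n) \<longlongrightarrow> bohr_monomial y n) F"
  unfolding bohr_monomial_def by (intro tendsto_intros assms)

lemma torus_zero_contra:
  assumes summ: "\<And>\<sigma>. \<sigma> > 0 \<Longrightarrow> summable (\<lambda>n. norm (a (Suc n)) * real (Suc n) powr (-\<sigma>))"
    and a1: "a 1 \<noteq> 0" and Dnz: "\<And>s. Re s > 0 \<Longrightarrow> dirichlet_series a s \<noteq> 0"
    and u: "\<And>j. norm (u j) = 1" and \<sigma>: "\<sigma> > 0"
  shows "bohr_transform a (\<lambda>j. u j * of_nat (nth_prime j) powr (- of_real \<sigma>)) \<noteq> 0"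
proof -
  obtain T :: "nat \<Rightarrow> real" where T: "\<And>j. (\<lambda>k. of_nat (nth_prime j) powr (- (\<i> * of_real (T k)))) \<longlonglongrightarrow> u j"
    using kron_seq[of u, OF u] by blast
  define x where "x = (\<lambda>k j. of_nat (nth_prime j) powr (- (\<i> * of_real (T k))) :: complex)"
  have h1: "\<And>k j. norm (x k j) \<le> 1" by (simp add: x_def norm_cnat_powr)
  have h2: "\<And>j. norm (u j) \<le> 1" using u by simp
  have h3: "\<And>n. (\<lambda>k. bohr_monomial (x k) (Suc n)) \<longlonglongrightarrow> bohr_monomial u (Suc n)"
    by (rule bm_tendsto) (use T in \<open>simp add: x_def\<close>)
  have h4: "bohr_transform a (\<lambda>j. x k j * of_nat (nth_prime j) powr (-s)) \<noteq> 0" if "Re s > \<sigma> / 2" for k s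
  proof -
    have eq: "(\<lambda>j. x k j * of_nat (nth_prime j) powr (-s)) = (\<lambda>j. (\<lambda>_. 1) j * of_nat (nth_prime j) powr (- (s + \<i> * of_real (T k))))"
    proof
      fix j
      have "x k j * of_nat (nth_prime j) powr (-s) =
            exp (- (\<i> * of_real (T k)) * of_real (ln (real (nth_prime j))) + (-s) * of_real (ln (real (nth_prime j))))"
        unfolding x_def by (simp only: cpn nth_prime_pos exp_add)
      also have "\<dots> = exp (- (s + \<i> * of_real (T k)) * of_real (ln (real (nth_prime j))))"
        by (simp add: algebra_simps)
      also have "\<dots> = (\<lambda>_. 1) j * of_nat (nth_prime j) powr (- (s + \<i> * of_real (T k)))"
        by (simp only: cpn nth_prime_pos mult_1_left)
      finally show "x k j * of_nat (nth_prime j) powr (-s) = (\<lambda>_. 1) j * of_nat (nth_prime j) powr (- (s + \<i> * of_real (T k)))" .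
    qed
    have "dirichlet_series a (s + \<i> * of_real (T k)) \<noteq> 0"
      using Dnz[of "s + \<i> * of_real (T k)"] that \<sigma> by simp
    then show ?thesis
      unfolding eq BD_DS by simp
  qed
  have "\<sigma> / 2 > 0" "Re (of_real \<sigma>) > \<sigma> / 2" using \<sigma> by auto
  from hurwitz_DS[OF summ this(1) h1 h2 h3 h4 a1 this(2)] show ?thesis by simp
qed



lemma BD_shift:
  "bohr_transform a (\<lambda>i. y i * of_nat (nth_prime i) powr (-e)) =
   bohr_transform (\<lambda>n. a n * of_nat n powr (-e)) y"
  unfolding bohr_transform_def
proof (intro arg_cong[where f=suminf] ext)
  fix n
  show "a (Suc n) * bohr_monomial (\<lambda>i. y i * of_nat (nth_prime i) powr - e) (Suc n) =
        a (Suc n) * of_nat (Suc n) powr - e * bohr_monomial y (Suc n)"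
    by (subst bm_DS) (simp_all del: of_nat_Suc)
qed

lemma shift_Ksig:
  assumes "y \<in> Ksig \<sigma>" "e \<ge> 0"
  shows "(\<lambda>i. y i * of_nat (nth_prime i) powr (- of_real e)) \<in> Ksig (\<sigma> + e)"
  unfolding Ksig_def
proof safe
  fix i
  have "norm (y i * of_nat (nth_prime i) powr (- of_real e)) = norm (y i) * real (nth_prime i) powr (-e)"
    by (simp add: norm_mult norm_cnat_powr)
  also have "\<dots> \<le> real (nth_prime i) powr (-\<sigma>) * real (nth_prime i) powr (-e)"
    using assms(1) by (intro mult_right_mono) (auto simp: Ksig_def)
  also have "\<dots> = real (nth_prime i) powr (- (\<sigma> + e))"
    by (simp add: powr_add[symmetric])
  finally show "norm (y i * of_nat (nth_prime i) powr (- of_real e)) \<le> real (nth_prime i) powr - (\<sigma> + e)" .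
qed

lemma summ_shift:
  fixes a :: "nat \<Rightarrow> complex"
  assumes "summable (\<lambda>n. norm (a (Suc n)) * real (Suc n) powr (-\<sigma>))" "e \<ge> 0"
  shows "summable (\<lambda>n. norm (a (Suc n) * of_nat (Suc n) powr (- of_real e)) * real (Suc n) powr (-\<sigma>))"
proof (rule summable_comparison_test'[OF assms(1)])
  fix n
  have "real (Suc n) powr (-e) \<le> real (Suc n) powr 0" using assms(2) by (intro powr_mono) auto
  then have "real (Suc n) powr (-e) \<le> 1" by simp
  then have "norm (a (Suc n) * of_nat (Suc n) powr (- of_real e)) \<le> norm (a (Suc n))"
    by (simp add: norm_mult norm_cnat_powr mult_left_le del: of_nat_Suc)
  then show "norm (norm (a (Suc n) * of_nat (Suc n) powr (- of_real e)) * real (Suc n) powr - \<sigma>) \<le> norm (a (Suc n)) * real (Suc n) powr - \<sigma>"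
    by (simp add: mult_right_mono)
qed

lemma step2:
  assumes summ: "summable (\<lambda>n. norm (a (Suc n)) * real (Suc n) powr (-\<sigma>))"
    and maxim: "\<And>\<tau> z. \<tau> > \<sigma> \<Longrightarrow> z \<in> Ksig \<tau> \<Longrightarrow> bohr_transform a z \<noteq> 0"
    and \<zeta>: "\<zeta> \<in> Ksig \<sigma>" and z0: "bohr_transform a \<zeta> = 0"
    and lt: "norm (\<zeta> j) < real (nth_prime j) powr (-\<sigma>)"
    and w: "norm w \<le> real (nth_prime j) powr (-\<sigma>)"
  shows "bohr_transform a (\<zeta>(j:=w)) = 0"
proof -
  define R where "R = real (nth_prime j) powr (-\<sigma>)"
  define S where "S = ball (0::complex) R"
  define \<epsilon> where "\<epsilon> = (\<lambda>k::nat. 1 / real (Suc k))"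
  have \<epsilon>pos: "\<epsilon> k > 0" for k by (simp add: \<epsilon>_def)
  define b where "b = (\<lambda>k n. a n * of_nat n powr (- of_real (\<epsilon> k)))"
  define F where "F = (\<lambda>k w. bohr_transform (b k) (\<zeta>(j:=w)))"
  define g where "g = (\<lambda>w. bohr_transform a (\<zeta>(j:=w)))"
  have memS: "\<zeta>(j:=w) \<in> Ksig \<sigma>" if "norm w \<le> R" for w
    using upd_Ksig[OF \<zeta>] that by (simp add: R_def)
  have sb: "summable (\<lambda>n. norm (b k (Suc n)) * real (Suc n) powr (-\<sigma>))" for k
    unfolding b_def by (rule summ_shift[OF summ]) (simp add: \<epsilon>_def)
  have S: "open S" "connected S" by (auto simp: S_def)
  have holF: "F k holomorphic_on S" for k
    unfolding F_def S_def R_def by (rule BD_coord_holo[OF sb \<zeta>])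
  have holg: "g holomorphic_on S"
    unfolding g_def S_def R_def by (rule BD_coord_holo[OF summ \<zeta>])
  have nz: "F k w \<noteq> 0" if "w \<in> S" for k w
  proof -
    have "F k w = bohr_transform a (\<lambda>i. (\<zeta>(j:=w)) i * of_nat (nth_prime i) powr (- of_real (\<epsilon> k)))"
      unfolding F_def b_def by (rule BD_shift[symmetric])
    moreover have "(\<lambda>i. (\<zeta>(j:=w)) i * of_nat (nth_prime i) powr (- of_real (\<epsilon> k))) \<in> Ksig (\<sigma> + \<epsilon> k)"
    proof (rule shift_Ksig[OF memS])
      show "norm w \<le> R" using that by (simp add: S_def)
      show "0 \<le> \<epsilon> k" using \<epsilon>pos[of k] by simp
    qed
    ultimately show ?thesis using maxim[of "\<sigma> + \<epsilon> k"] \<epsilon>pos[of k] by auto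
  qed
  define \<eta> where "\<eta> = (\<lambda>k. \<Sum>n. norm (b k (Suc n) - a (Suc n)) * real (Suc n) powr (-\<sigma>))"
  have bnd: "norm (F k w - g w) \<le> \<eta> k" if "w \<in> S" for k w
    unfolding F_def g_def \<eta>_def
    by (rule BD_diff_bound[OF sb summ memS]) (use that in \<open>auto simp: S_def\<close>)
  have \<eta>0: "\<eta> \<longlonglongrightarrow> 0"
  proof -
    have l: "((\<lambda>k. norm (b k (Suc n) - a (Suc n)) * real (Suc n) powr (-\<sigma>)) \<longlongrightarrow> 0) sequentially" for n
    proof -
      have e0: "\<epsilon> \<longlonglongrightarrow> 0" unfolding \<epsilon>_def by (rule LIMSEQ_inverse_real_of_nat[unfolded inverse_eq_divide])
      have "(\<lambda>k. exp (- of_real (\<epsilon> k) * of_real (ln (real (Suc n))))) \<longlonglongrightarrow> exp (- of_real 0 * of_real (ln (real (Suc n))) :: complex)"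
        by (intro tendsto_intros e0)
      then have L: "((\<lambda>k. of_nat (Suc n) powr (- of_real (\<epsilon> k) :: complex)) \<longlongrightarrow> of_nat (Suc n) powr (- of_real 0)) sequentially"
        by (simp add: cpn del: of_nat_Suc)
      have "((\<lambda>k. norm (a (Suc n) * of_nat (Suc n) powr (- of_real (\<epsilon> k)) - a (Suc n)) * real (Suc n) powr (-\<sigma>)) \<longlongrightarrow>
                  norm (a (Suc n) * of_nat (Suc n) powr (- of_real 0) - a (Suc n)) * real (Suc n) powr (-\<sigma>)) sequentially"
        by (rule tendsto_mult[OF tendsto_norm[OF tendsto_diff[OF tendsto_mult[OF tendsto_const L] tendsto_const]] tendsto_const])
      then show ?thesis by (simp add: b_def del: of_nat_Suc)
    qed
    have e: "\<forall>\<^sub>F (n, k) in at_top \<times>\<^sub>F sequentially. norm (norm (b k (Suc n) - a (Suc n)) * real (Suc n) powr (-\<sigma>)) \<le> 2 * (norm (a (Suc n)) * real (Suc n) powr (-\<sigma>))"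
    proof (intro always_eventually allI, clarify)
      fix n k
      have "real (Suc n) powr (- \<epsilon> k) \<le> real (Suc n) powr 0" using \<epsilon>pos[of k] by (intro powr_mono) auto
      then have "real (Suc n) powr (- \<epsilon> k) \<le> 1" by simp
      then have "norm (b k (Suc n)) \<le> norm (a (Suc n))"
        by (simp add: b_def norm_mult norm_cnat_powr mult_left_le del: of_nat_Suc)
      then have "norm (b k (Suc n) - a (Suc n)) \<le> 2 * norm (a (Suc n))"
        using norm_triangle_ineq4[of "b k (Suc n)" "a (Suc n)"] by linarith
      then have "norm (b k (Suc n) - a (Suc n)) * real (Suc n) powr (-\<sigma>) \<le> (2 * norm (a (Suc n))) * real (Suc n) powr (-\<sigma>)"
        by (intro mult_right_mono) auto
      then show "norm (norm (b k (Suc n) - a (Suc n)) * real (Suc n) powr (-\<sigma>)) \<le> 2 * (norm (a (Suc n)) * real (Suc n) powr (-\<sigma>))"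
        by (simp add: mult.assoc)
    qed
    have "summable (\<lambda>n. 2 * (norm (a (Suc n)) * real (Suc n) powr (-\<sigma>)))"
      using summ by (rule summable_mult)
    from tannerys_theorem[OF l e this] show ?thesis unfolding \<eta>_def by simp
  qed
  have ul: "uniform_limit K F g sequentially" if "compact K" "K \<subseteq> S" for K
  proof (rule uniform_limitI)
    fix e :: real assume "e > 0"
    then have "eventually (\<lambda>k. \<eta> k < e) sequentially"
      using \<eta>0 by (intro order_tendstoD) auto
    then show "\<forall>\<^sub>F k in sequentially. \<forall>s\<in>K. dist (F k s) (g s) < e"
    proof eventually_elim
      case (elim k)
      show ?case using bnd[of _ k] elim that(2) by (auto simp: dist_norm intro: le_less_trans)
    qed
  qed
  have \<zeta>S: "\<zeta> j \<in> S" using lt by (simp add: S_def R_def)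
  have g\<zeta>: "g (\<zeta> j) = 0" using z0 by (simp add: g_def)
  have const: "g constant_on S"
  proof (rule ccontr)
    assume nc: "\<not> g constant_on S"
    have "g (\<zeta> j) \<noteq> 0" by (rule Hurwitz_no_zeros[OF S holF holg ul nc nz \<zeta>S])
    with g\<zeta> show False by simp
  qed
  have g0: "g v = 0" if "v \<in> S" for v
    using const g\<zeta> \<zeta>S that unfolding constant_on_def by metis
  define wm where "wm = (\<lambda>m::nat. of_real (1 - 1 / real (Suc (Suc m))) * w)"
  have wmS: "wm m \<in> S" for m
  proof -
    have "norm (wm m) = \<bar>1 - 1 / real (Suc (Suc m))\<bar> * norm w"
      unfolding wm_def norm_mult norm_of_real ..
    have ab: "\<bar>1 - 1 / real (Suc (Suc m))\<bar> = 1 - 1 / real (Suc (Suc m))"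
      by (intro abs_of_nonneg) (simp add: field_simps)
    note \<open>norm (wm m) = \<bar>1 - 1 / real (Suc (Suc m))\<bar> * norm w\<close>
    also have "\<bar>1 - 1 / real (Suc (Suc m))\<bar> * norm w = (1 - 1 / real (Suc (Suc m))) * norm w" using ab by simp
    also have "\<dots> < R"
    proof (cases "w = 0")
      case True then show ?thesis by (simp add: R_def)
    next
      case False
      then have "(1 - 1 / real (Suc (Suc m))) * norm w < 1 * norm w"
        by (intro mult_strict_right_mono) auto
      then show ?thesis using w by (simp add: R_def)
    qed
    finally show ?thesis by (simp add: S_def)
  qed
  have wm_lim: "wm \<longlonglongrightarrow> w"
  proof -
    have "(\<lambda>m. 1 / real (Suc (Suc m))) \<longlonglongrightarrow> 0"
      using LIMSEQ_inverse_real_of_nat[THEN LIMSEQ_Suc] by (simp add: inverse_eq_divide)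
    then have "(\<lambda>m. of_real (1 - 1 / real (Suc (Suc m))) * w) \<longlonglongrightarrow> of_real (1 - 0) * w"
      by (intro tendsto_intros)
    then show ?thesis by (simp add: wm_def)
  qed
  have "(\<lambda>m. g (wm m)) \<longlonglongrightarrow> g w"
    unfolding g_def
  proof (rule BD_tendsto[OF summ])
    show "\<zeta>(j := wm m) \<in> Ksig \<sigma>" for m using memS[of "wm m"] wmS[of m] by (auto simp: S_def)
    show "(\<lambda>m. bohr_monomial (\<zeta>(j := wm m)) (Suc n)) \<longlonglongrightarrow> bohr_monomial (\<zeta>(j := w)) (Suc n)" for n
      by (rule bm_tendsto) (use wm_lim in auto)
  qed simp
  moreover have "(\<lambda>m. g (wm m)) = (\<lambda>_. 0)" using g0 wmS by auto
  ultimately have "g w = 0" using LIMSEQ_unique tendsto_const by metis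
  then show ?thesis by (simp add: g_def)
qed



lemma step3:
  assumes summ: "summable (\<lambda>n. norm (a (Suc n)) * real (Suc n) powr (-\<sigma>))"
    and maxim: "\<And>\<tau> z. \<tau> > \<sigma> \<Longrightarrow> z \<in> Ksig \<tau> \<Longrightarrow> bohr_transform a z \<noteq> 0"
    and \<zeta>: "\<zeta> \<in> Ksig \<sigma>" and z0: "bohr_transform a \<zeta> = 0"
  obtains \<xi> where "bohr_transform a \<xi> = 0" "\<And>j. norm (\<xi> j) = real (nth_prime j) powr (-\<sigma>)"
proof -
  define \<gamma> where "\<gamma> = (\<lambda>j. real (nth_prime j) powr (-\<sigma>))"
  define Z where "Z = (\<lambda>N i. if i < N \<and> norm (\<zeta> i) < \<gamma> i then complex_of_real (\<gamma> i) else \<zeta> i)"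
  have Z: "Z N \<in> Ksig \<sigma> \<and> bohr_transform a (Z N) = 0" for N
  proof (induction N)
    case 0
    have "Z 0 = \<zeta>" by (simp add: Z_def)
    then show ?case using \<zeta> z0 by simp
  next
    case (Suc N)
    show ?case
    proof (cases "norm (\<zeta> N) < \<gamma> N")
      case True
      have eq: "Z (Suc N) = (Z N)(N := complex_of_real (\<gamma> N))"
        using True by (auto simp: Z_def fun_eq_iff)
      have lt: "norm (Z N N) < real (nth_prime N) powr (-\<sigma>)" using True by (simp add: Z_def \<gamma>_def)
      have nw: "norm (complex_of_real (\<gamma> N)) \<le> real (nth_prime N) powr (-\<sigma>)" by (simp add: \<gamma>_def)
      have "bohr_transform a (Z (Suc N)) = 0"
        unfolding eq
      proof (rule step2[where \<sigma>=\<sigma>])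
        show "summable (\<lambda>n. norm (a (Suc n)) * real (Suc n) powr (-\<sigma>))" by (rule summ)
        show "\<And>\<tau> z. \<tau> > \<sigma> \<Longrightarrow> z \<in> Ksig \<tau> \<Longrightarrow> bohr_transform a z \<noteq> 0" by (rule maxim)
        show "Z N \<in> Ksig \<sigma>" "bohr_transform a (Z N) = 0" using Suc.IH by auto
      qed (rule lt, rule nw)
      moreover have "Z (Suc N) \<in> Ksig \<sigma>" unfolding eq using upd_Ksig[OF _ nw] Suc.IH by blast
      ultimately show ?thesis by simp
    next
      case False
      have "Z (Suc N) = Z N" using False by (auto simp: Z_def fun_eq_iff less_Suc_eq)
      then show ?thesis using Suc.IH by simp
    qed
  qed
  define \<xi> where "\<xi> = (\<lambda>i. if norm (\<zeta> i) < \<gamma> i then complex_of_real (\<gamma> i) else \<zeta> i)"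
  have "(\<lambda>N. bohr_transform a (Z N)) \<longlonglongrightarrow> bohr_transform a \<xi>"
  proof (rule BD_tendsto[OF summ])
    show "Z N \<in> Ksig \<sigma>" for N using Z by blast
    fix n
    have "eventually (\<lambda>N. bohr_monomial (Z N) (Suc n) = bohr_monomial \<xi> (Suc n)) sequentially"
      using eventually_ge_at_top[of "Suc n"]
    proof eventually_elim
      case (elim N) then show ?case by (intro bm_local_less) (auto simp: Z_def \<xi>_def)
    qed
    then show "(\<lambda>N. bohr_monomial (Z N) (Suc n)) \<longlonglongrightarrow> bohr_monomial \<xi> (Suc n)"
      by (rule tendsto_eventually)
  qed simp
  moreover have "(\<lambda>N. bohr_transform a (Z N)) = (\<lambda>_. 0)" using Z by auto
  ultimately have "bohr_transform a \<xi> = 0" using LIMSEQ_unique tendsto_const by metis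
  moreover have "norm (\<xi> j) = real (nth_prime j) powr (-\<sigma>)" for j
    using \<zeta> by (auto simp: \<xi>_def \<gamma>_def Ksig_def intro: antisym)
  ultimately show ?thesis using that by blast
qed

lemma Ksig_compact: "compact (Ksig \<sigma>)"
proof -
  have "compactin (product_topology (\<lambda>i. euclidean) UNIV) (PiE UNIV (\<lambda>j. cball (0::complex) (real (nth_prime j) powr (-\<sigma>))))"
    by (simp add: compactin_PiE)
  then have "compact (PiE UNIV (\<lambda>j. cball (0::complex) (real (nth_prime j) powr (-\<sigma>))))"
    by (simp add: euclidean_product_topology)
  moreover have "PiE UNIV (\<lambda>j. cball (0::complex) (real (nth_prime j) powr (-\<sigma>))) = Ksig \<sigma>"
    by (auto simp: Ksig_def PiE_def Pi_def extensional_def)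
  ultimately show ?thesis by simp
qed

lemma step1:
  assumes summ: "\<And>\<sigma>. \<sigma> > 0 \<Longrightarrow> summable (\<lambda>n. norm (a (Suc n)) * real (Suc n) powr (-\<sigma>))"
    and a1: "a 1 \<noteq> 0" and \<sigma>0: "\<sigma>0 > 0" and z0: "z0 \<in> Ksig \<sigma>0" "bohr_transform a z0 = 0"
  obtains \<sigma>s \<zeta> where "\<sigma>s \<ge> \<sigma>0" "\<zeta> \<in> Ksig \<sigma>s" "bohr_transform a \<zeta> = 0"
    "\<And>\<tau> z. \<tau> > \<sigma>s \<Longrightarrow> z \<in> Ksig \<tau> \<Longrightarrow> bohr_transform a z \<noteq> 0"
proof -
  obtain \<sigma>B where \<sigma>B: "\<And>\<sigma> z. \<sigma> \<ge> \<sigma>B \<Longrightarrow> z \<in> Ksig \<sigma> \<Longrightarrow> bohr_transform a z \<noteq> 0"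
    using BD_far_nz[OF summ[of 1] a1] by (metis zero_less_one)
  define Zs where "Zs = {\<sigma>. \<sigma> \<ge> \<sigma>0 \<and> (\<exists>z\<in>Ksig \<sigma>. bohr_transform a z = 0)}"
  have inZ: "\<sigma>0 \<in> Zs" using z0 by (auto simp: Zs_def)
  have ne: "Zs \<noteq> {}" using inZ by blast
  have bdd: "bdd_above Zs"
  proof (rule bdd_aboveI)
    fix \<sigma> assume "\<sigma> \<in> Zs"
    then obtain z where "z \<in> Ksig \<sigma>" "bohr_transform a z = 0" by (auto simp: Zs_def)
    then show "\<sigma> \<le> \<sigma>B" using \<sigma>B[of \<sigma> z] by linarith
  qed
  define \<sigma>s where "\<sigma>s = Sup Zs"
  have ge: "\<sigma>s \<ge> \<sigma>0" unfolding \<sigma>s_def by (rule cSup_upper[OF inZ bdd])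
  have maxim: "bohr_transform a z \<noteq> 0" if "\<tau> > \<sigma>s" "z \<in> Ksig \<tau>" for \<tau> z
  proof
    assume "bohr_transform a z = 0"
    then have "\<tau> \<in> Zs" using that ge by (auto simp: Zs_def)
    then have "\<tau> \<le> \<sigma>s" unfolding \<sigma>s_def by (rule cSup_upper[OF _ bdd])
    with that show False by simp
  qed
  have "\<forall>k. \<exists>\<sigma> z. \<sigma> \<in> Zs \<and> \<sigma>s - 1 / real (Suc k) < \<sigma> \<and> z \<in> Ksig \<sigma> \<and> bohr_transform a z = 0"
  proof
    fix k
    have "\<sigma>s - 1 / real (Suc k) < Sup Zs" by (simp add: \<sigma>s_def)
    then obtain \<sigma> where "\<sigma> \<in> Zs" "\<sigma>s - 1 / real (Suc k) < \<sigma>"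
      using less_cSup_iff[OF ne bdd] by blast
    then show "\<exists>\<sigma> z. \<sigma> \<in> Zs \<and> \<sigma>s - 1 / real (Suc k) < \<sigma> \<and> z \<in> Ksig \<sigma> \<and> bohr_transform a z = 0"
      by (auto simp: Zs_def)
  qed
  then obtain sg zz where sz: "\<And>k. sg k \<in> Zs" "\<And>k. \<sigma>s - 1 / real (Suc k) < sg k"
      "\<And>k. zz k \<in> Ksig (sg k)" "\<And>k. bohr_transform a (zz k) = 0"
    by metis
  have sgle: "sg k \<le> \<sigma>s" for k unfolding \<sigma>s_def by (rule cSup_upper[OF sz(1) bdd])
  have sgge: "sg k \<ge> \<sigma>0" for k using sz(1)[of k] by (simp add: Zs_def)
  have zz0: "zz k \<in> Ksig \<sigma>0" for k using sz(3)[of k] Ksig_antimono[OF sgge[of k]] by blast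
  obtain l r where l: "l \<in> Ksig \<sigma>0" and r: "strict_mono r" and lim: "(zz \<circ> r) \<longlonglongrightarrow> l"
    using compact_imp_seq_compact[OF Ksig_compact[of \<sigma>0]] zz0 unfolding seq_compact_def by metis
  have limj: "(\<lambda>k. zz (r k) j) \<longlonglongrightarrow> l j" for j
  proof -
    have "isCont (\<lambda>x::nat \<Rightarrow> complex. x j) l"
      using continuous_on_product_coordinates[of j] continuous_on_eq_continuous_at[OF open_UNIV] by blast
    from isCont_tendsto_compose[OF this lim] show ?thesis by (simp add: o_def)
  qed
  have sglim: "(\<lambda>k. sg (r k)) \<longlonglongrightarrow> \<sigma>s"
  proof (rule tendsto_sandwich[where f = "\<lambda>k. \<sigma>s - 1 / real (Suc k)" and h = "\<lambda>_. \<sigma>s"])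
    show "eventually (\<lambda>k. \<sigma>s - 1 / real (Suc k) \<le> sg (r k)) sequentially"
    proof (intro always_eventually allI)
      fix k
      have "1 / real (Suc (r k)) \<le> 1 / real (Suc k)"
        using seq_suble[OF r, of k] by (intro divide_left_mono) auto
      then show "\<sigma>s - 1 / real (Suc k) \<le> sg (r k)" using sz(2)[of "r k"] by linarith
    qed
    show "eventually (\<lambda>k. sg (r k) \<le> \<sigma>s) sequentially" using sgle by simp
    have "(\<lambda>k. \<sigma>s - 1 / real (Suc k)) \<longlonglongrightarrow> \<sigma>s - 0"
      by (intro tendsto_intros LIMSEQ_inverse_real_of_nat[unfolded inverse_eq_divide])
    then show "(\<lambda>k. \<sigma>s - 1 / real (Suc k)) \<longlonglongrightarrow> \<sigma>s" by simp
  qed simp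
  have lK: "l \<in> Ksig \<sigma>s" unfolding Ksig_def
  proof safe
    fix j
    have "(\<lambda>k. real (nth_prime j) powr (- sg (r k))) \<longlonglongrightarrow> real (nth_prime j) powr (- \<sigma>s)"
      by (intro tendsto_intros sglim) auto
    moreover have "(\<lambda>k. norm (zz (r k) j)) \<longlonglongrightarrow> norm (l j)" by (intro tendsto_intros limj)
    moreover have "eventually (\<lambda>k. norm (zz (r k) j) \<le> real (nth_prime j) powr (- sg (r k))) sequentially"
      using sz(3) by (auto simp: Ksig_def)
    ultimately show "norm (l j) \<le> real (nth_prime j) powr (- \<sigma>s)"
      by (intro tendsto_le[OF trivial_limit_sequentially]) auto
  qed
  have "(\<lambda>k. bohr_transform a (zz (r k))) \<longlonglongrightarrow> bohr_transform a l"
  proof (rule BD_tendsto[OF summ[OF \<sigma>0]])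
    show "zz (r k) \<in> Ksig \<sigma>0" for k by (rule zz0)
    show "(\<lambda>k. bohr_monomial (zz (r k)) (Suc n)) \<longlonglongrightarrow> bohr_monomial l (Suc n)" for n
      by (rule bm_tendsto) (rule limj)
  qed simp
  moreover have "(\<lambda>k. bohr_transform a (zz (r k))) = (\<lambda>_. 0)" using sz(4) by auto
  ultimately have "bohr_transform a l = 0" using LIMSEQ_unique tendsto_const by metis
  then show ?thesis using that ge lK maxim by blast
qed

lemma hard:
  assumes summ: "\<And>\<sigma>. \<sigma> > 0 \<Longrightarrow> summable (\<lambda>n. norm (a (Suc n)) * real (Suc n) powr (-\<sigma>))"
    and a1: "a 1 \<noteq> 0" and Dnz: "\<And>s. Re s > 0 \<Longrightarrow> dirichlet_series a s \<noteq> 0"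
    and \<sigma>: "\<sigma> > 0" and z: "z \<in> Ksig \<sigma>"
  shows "bohr_transform a z \<noteq> 0"
proof
  assume "bohr_transform a z = 0"
  then obtain \<sigma>s \<zeta> where s: "\<sigma>s \<ge> \<sigma>" "\<zeta> \<in> Ksig \<sigma>s" "bohr_transform a \<zeta> = 0"
    "\<And>\<tau> z. \<tau> > \<sigma>s \<Longrightarrow> z \<in> Ksig \<tau> \<Longrightarrow> bohr_transform a z \<noteq> 0"
    using step1[OF summ a1 \<sigma> z] by metis
  have \<sigma>s: "\<sigma>s > 0" using s(1) \<sigma> by linarith
  obtain \<xi> where \<xi>: "bohr_transform a \<xi> = 0" "\<And>j. norm (\<xi> j) = real (nth_prime j) powr (-\<sigma>s)"
  proof (rule step3[where \<sigma>=\<sigma>s and \<zeta>=\<zeta> and a=a])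
    show "summable (\<lambda>n. norm (a (Suc n)) * real (Suc n) powr (-\<sigma>s))" by (rule summ[OF \<sigma>s])
    show "\<And>\<tau> z. \<tau> > \<sigma>s \<Longrightarrow> z \<in> Ksig \<tau> \<Longrightarrow> bohr_transform a z \<noteq> 0" by (rule s(4))
  qed (use s in auto)
  define u where "u = (\<lambda>j. \<xi> j / of_nat (nth_prime j) powr (- of_real \<sigma>s))"
  have nzp: "of_nat (nth_prime j) powr (- of_real \<sigma>s) \<noteq> (0::complex)" for j
    by (simp add: cpn)
  have u1: "norm (u j) = 1" for j
    using \<xi>(2)[of j] by (simp add: u_def norm_divide norm_cnat_powr)
  have "(\<lambda>j. u j * of_nat (nth_prime j) powr (- of_real \<sigma>s)) = \<xi>"
    using nzp by (auto simp: u_def)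
  moreover have "bohr_transform a (\<lambda>j. u j * of_nat (nth_prime j) powr (- of_real \<sigma>s)) \<noteq> 0"
    by (rule torus_zero_contra[OF summ a1 Dnz u1 \<sigma>s])
  ultimately show False using \<xi>(1) by simp
qed



theorem lemma2p8:
  fixes a :: "nat \<Rightarrow> complex"
  assumes "abs_conv_abscissa a \<le> 0"
  shows "((\<forall>z\<in>D0_infty. bohr_transform a z \<noteq> 0) \<longleftrightarrow>
           (a 1 \<noteq> 0 \<and> (\<forall>s. Re s > 0 \<longrightarrow> dirichlet_series a s \<noteq> 0)))
       \<and> ((a 1 \<noteq> 0 \<and> (\<forall>s. Re s > 0 \<longrightarrow> dirichlet_series a s \<noteq> 0)) \<longrightarrow>
           (\<forall>\<rho>. completely_multiplicative \<rho> \<and> (\<forall>n\<ge>1. norm (\<rho> n) \<le> 1) \<longrightarrow>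
              (\<forall>s. Re s > 0 \<longrightarrow> dirichlet_series (\<lambda>n. a n * \<rho> n) s \<noteq> 0)))"
proof -
  have summ: "\<And>\<sigma>. \<sigma> > 0 \<Longrightarrow> summable (\<lambda>n. norm (a (Suc n)) * real (Suc n) powr (-\<sigma>))"
    using summable_from_abscissa[OF assms] by blast
  have rev: "\<forall>z\<in>D0_infty. bohr_transform a z \<noteq> 0"
    if a1: "a 1 \<noteq> 0" and Dnz: "\<forall>s. Re s > 0 \<longrightarrow> dirichlet_series a s \<noteq> 0"
  proof
    fix z assume "z \<in> D0_infty"
    then obtain \<sigma> where "\<sigma> > 0" "z \<in> Ksig \<sigma>" by (rule D0_sub_Ksig)
    then show "bohr_transform a z \<noteq> 0" using hard[OF summ a1] Dnz by blast
  qed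
  have part2: "\<forall>\<rho>. completely_multiplicative \<rho> \<and> (\<forall>n\<ge>1. norm (\<rho> n) \<le> 1) \<longrightarrow>
              (\<forall>s. Re s > 0 \<longrightarrow> dirichlet_series (\<lambda>n. a n * \<rho> n) s \<noteq> 0)"
    if a1: "a 1 \<noteq> 0" and Dnz: "\<forall>s. Re s > 0 \<longrightarrow> dirichlet_series a s \<noteq> 0"
  proof (intro allI impI)
    fix \<rho> :: "nat \<Rightarrow> complex" and s :: complex
    assume \<rho>: "completely_multiplicative \<rho> \<and> (\<forall>n\<ge>1. norm (\<rho> n) \<le> 1)" and s: "Re s > 0"
    define x where "x = (\<lambda>j. \<rho> (nth_prime j))"
    have x1: "\<And>j. norm (x j) \<le> 1" using \<rho> by (auto simp: x_def Suc_le_eq)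
    have "dirichlet_series (\<lambda>n. a n * \<rho> n) s = dirichlet_series (\<lambda>n. a n * bohr_monomial x n) s"
      unfolding dirichlet_series_def x_def using bm_cm[of \<rho>] \<rho> by simp
    also have "\<dots> = bohr_transform a (\<lambda>j. x j * of_nat (nth_prime j) powr (-s))"
      by (rule BD_DS[symmetric])
    also have "\<dots> \<noteq> 0"
      by (rule hard[OF summ a1 _ s BD_DS_mem[OF x1]]) (use Dnz in auto)
    finally show "dirichlet_series (\<lambda>n. a n * \<rho> n) s \<noteq> 0" .
  qed
  show ?thesis using easy_dir[OF summ] rev part2 by blast
qed

end
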